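(* Let $X$ be a real reflexive Banach space satisfying (CFPP). Let $F = \bigcap_{k=1}^\infty F_k$, where for each $k$, $F_k = \{x \in X : f_k(x) \le d_k\}$ with $f_k \in X^*$, $\|f_k\| = 1$, $d_k \ge 0$, and $F_k$ is a contractive set. For each $k$ let $y_k \in X$ with $f_k(y_k) = 1$ be such that $P_k x = x - f_k(x) y_k$ defines a linear projection of norm one from $X$ onto $\ker(f_k)$. If $0 \notin \mathrm{cl}(\mathrm{conv}(\{y_k\}_{k \in \mathbb{N}}))$, then $F$ is a contractive set.
   Context: A real Banach space $X$ has (CFPP) if for every non-empty, convex, closed and bounded set $D \subset X$ and every nonexpansive mapping $T : X \to X$ (i.e. $\|Tx - Ty\| \le \|x-y\|$) with $T(D) \subset D$, $T$ has a fixed point in $D$. A non-empty set $D \subset X$ is contractive if there exists $P : X \to D$ with $P|_D = \mathrm{id}_D$ and $\|Px - Py\| \le \|x-y\|$ for all $x,y \in X$. $\mathrm{cl}(\mathrm{conv}(\cdot))$ is the norm-closed convex hull. *)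

theory Defs
  imports "HOL-Analysis.Analysis"
begin

definition nonexpansive :: "('a::real_normed_vector \<Rightarrow> 'a) \<Rightarrow> bool" where
  "nonexpansive T \<longleftrightarrow> (\<forall>x y. norm (T x - T y) \<le> norm (x - y))"

text \<open>Reflexivity: the canonical embedding of X into its bidual is surjective
  (it is always an isometric linear injection).\<close>
definition reflexive_space :: "'a::banach itself \<Rightarrow> bool" where
  "reflexive_space (_::'a itself) \<longleftrightarrow>
     (\<forall>\<phi> :: ('a \<Rightarrow>\<^sub>L real) \<Rightarrow>\<^sub>L real. \<exists>x::'a. \<forall>f. blinfun_apply \<phi> f = blinfun_apply f x)"

definition CFPP :: "'a::real_normed_vector itself \<Rightarrow> bool" where
  "CFPP (_::'a itself) \<longleftrightarrow>
     (\<forall>(D::'a set) T. D \<noteq> {} \<and> convex D \<and> closed D \<and> bounded D \<and>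
        nonexpansive T \<and> T ` D \<subseteq> D \<longrightarrow> (\<exists>x\<in>D. T x = x))"

definition contractive_set :: "'a::real_normed_vector set \<Rightarrow> bool" where
  "contractive_set D \<longleftrightarrow> D \<noteq> {} \<and>
     (\<exists>P. (\<forall>x. P x \<in> D) \<and> (\<forall>x\<in>D. P x = x) \<and> nonexpansive P)"

end

theory Submission
  imports Defs
begin

primrec iterQ :: "(nat \<Rightarrow> 'a \<Rightarrow> 'a) \<Rightarrow> nat \<Rightarrow> 'a \<Rightarrow> 'a" where
  "iterQ Q 0 x = x"
| "iterQ Q (Suc n) x = Q n (iterQ Q n x)"

lemma Q_nonexp:
  fixes f :: "'a::real_normed_vector \<Rightarrow>\<^sub>L real" and y :: 'a
  assumes fy: "blinfun_apply f y = 1"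
    and on: "onorm (\<lambda>x. x - blinfun_apply f x *\<^sub>R y) = 1"
  shows "norm ((x - max 0 (blinfun_apply f x - d) *\<^sub>R y) - (z - max 0 (blinfun_apply f z - d) *\<^sub>R y))
         \<le> norm (x - z)"
proof -
  let ?P = "\<lambda>x. x - blinfun_apply f x *\<^sub>R y"
  have bl: "bounded_linear ?P"
    by (intro bounded_linear_sub bounded_linear_ident bounded_linear_scaleR_const blinfun.bounded_linear_right)
  have Pb: "norm (?P u) \<le> norm u" for u
    using onorm[OF bl, of u] on by simp
  define u where "u = x - z"
  define c where "c = max 0 (blinfun_apply f x - d) - max 0 (blinfun_apply f z - d)"
  have fu: "blinfun_apply f u = blinfun_apply f x - blinfun_apply f z"
    unfolding u_def by (simp add: blinfun.diff_right)
  have eq: "(x - max 0 (blinfun_apply f x - d) *\<^sub>R y) - (z - max 0 (blinfun_apply f z - d) *\<^sub>R y)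
      = u - c *\<^sub>R y" unfolding u_def c_def by (simp add: algebra_simps)
  show ?thesis
  proof (cases "blinfun_apply f u = 0")
    case True
    then have "c = 0" using fu unfolding c_def by simp
    then show ?thesis by (simp only: eq u_def) simp
  next
    case False
    define l where "l = c / blinfun_apply f u"
    have cl: "c = l * blinfun_apply f u" using False unfolding l_def by simp
    have h1: "c * blinfun_apply f u \<ge> 0" and h2: "\<bar>c\<bar> \<le> \<bar>blinfun_apply f u\<bar>"
      unfolding c_def fu by (auto simp: max_def mult_nonneg_nonneg mult_nonpos_nonpos)
    have l0: "0 \<le> l" using h1 by (simp add: l_def zero_le_divide_iff zero_le_mult_iff)
    have "\<bar>l\<bar> \<le> 1" using h2 False by (simp add: l_def abs_divide divide_le_eq_1)
    then have l1: "l \<le> 1" by simp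
    have "u - c *\<^sub>R y = (1 - l) *\<^sub>R u + l *\<^sub>R ?P u"
      using cl by (simp add: algebra_simps)
    also have "norm \<dots> \<le> (1 - l) * norm u + l * norm (?P u)"
      by (rule order_trans[OF norm_triangle_ineq]) (use l0 l1 in simp)
    also have "\<dots> \<le> (1 - l) * norm u + l * norm u"
      using Pb[of u] l0 by (simp add: mult_left_mono)
    finally have "norm (u - c *\<^sub>R y) \<le> norm u" by (simp add: algebra_simps)
    then show ?thesis by (simp only: eq u_def)
  qed
qed

lemma y_bound:
  fixes f :: "'a::real_normed_vector \<Rightarrow>\<^sub>L real" and y :: 'a
  assumes fy: "blinfun_apply f y = 1" and nf: "norm f = 1"
    and on: "onorm (\<lambda>x. x - blinfun_apply f x *\<^sub>R y) = 1"
  shows "norm y \<le> 2"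
proof -
  let ?P = "\<lambda>x. x - blinfun_apply f x *\<^sub>R y"
  have bl: "bounded_linear ?P"
    by (intro bounded_linear_sub bounded_linear_ident bounded_linear_scaleR_const blinfun.bounded_linear_right)
  have Pb: "norm (?P u) \<le> norm u" for u
    using onorm[OF bl, of u] on by simp
  have y0: "y \<noteq> 0" using fy by auto
  then have ny: "norm y > 0" by simp
  have "norm (blinfun_apply f x) \<le> (2 / norm y) * norm x" for x
  proof -
    have "\<bar>blinfun_apply f x\<bar> * norm y = norm (x - ?P x)" by simp
    also have "\<dots> \<le> norm x + norm (?P x)" by (rule norm_triangle_ineq4)
    also have "\<dots> \<le> 2 * norm x" using Pb[of x] by simp
    finally show ?thesis using ny by (simp add: divide_simps mult.commute)
  qed
  then have "norm f \<le> 2 / norm y" by (intro norm_blinfun_bound) (use ny in auto)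
  then show ?thesis using nf ny by (simp add: divide_simps)
qed

theorem theorem22:
  fixes f :: "nat \<Rightarrow> ('a::banach \<Rightarrow>\<^sub>L real)"
    and d :: "nat \<Rightarrow> real"
    and y :: "nat \<Rightarrow> 'a"
  assumes "reflexive_space TYPE('a)"
    and "CFPP TYPE('a)"
    and "\<And>k. norm (f k) = 1"
    and "\<And>k. d k \<ge> 0"
    and "\<And>k. contractive_set {x. blinfun_apply (f k) x \<le> d k}"
    and "\<And>k. blinfun_apply (f k) (y k) = 1"
    and "\<And>k. onorm (\<lambda>x. x - blinfun_apply (f k) x *\<^sub>R y k) = 1"
    and "0 \<notin> closure (convex hull (range y))"
  shows "contractive_set (\<Inter>k. {x. blinfun_apply (f k) x \<le> d k})"
proof -
  note nf = assms(3) and d0 = assms(4) and fy = assms(6) and on = assms(7) and hy = assms(8)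
  define F where "F = (\<Inter>k. {x. blinfun_apply (f k) x \<le> d k})"
  define Q where "Q = (\<lambda>k x. x - max 0 (blinfun_apply (f k) x - d k) *\<^sub>R y k)"
  define kk where "kk = (\<lambda>n. fst (prod_decode n))"
  define R where "R = (\<lambda>n x. iterQ (\<lambda>m. Q (kk m)) n x)"
  define t where "t = (\<lambda>x m. max 0 (blinfun_apply (f (kk m)) (R m x) - d (kk m)))"
  have R0: "R 0 x = x" for x unfolding R_def by simp
  have RS: "R (Suc n) x = Q (kk n) (R n x)" for n x unfolding R_def by simp
  have Qne: "norm (Q k x - Q k z) \<le> norm (x - z)" for k x z
    unfolding Q_def by (rule Q_nonexp[OF fy on])
  have Rne: "norm (R n x - R n z) \<le> norm (x - z)" for n x z
  proof (induction n)
    case 0 then show ?case by (simp add: R0)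
  next
    case (Suc n) then show ?case using Qne[of "kk n" "R n x" "R n z"] by (simp add: RS)
  qed
  have QF: "Q k p = p" if "p \<in> F" for k p
    using that unfolding F_def Q_def by auto
  have RF: "R n p = p" if "p \<in> F" for n p
    by (induction n) (simp_all add: R0 RS QF[OF that])
  have F0: "0 \<in> F" unfolding F_def using d0 by simp
  have Rnorm: "norm (R n x) \<le> norm x" for n x
    using Rne[of n x 0] RF[OF F0] by simp
  have Rsum: "R n x = x - (\<Sum>m<n. t x m *\<^sub>R y (kk m))" for n x
    by (induction n) (simp_all add: R0 RS Q_def t_def algebra_simps)
  have t0: "t x m \<ge> 0" for x m unfolding t_def by simp
  obtain e where e0: "e > 0" and he: "\<And>c. c \<in> convex hull (range y) \<Longrightarrow> e \<le> norm c"
  proof -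
    from hy obtain e where "e > 0" "\<forall>c\<in>convex hull (range y). \<not> dist c 0 < e"
      unfolding closure_approachable by blast
    then show ?thesis using that[of e] by (auto simp: not_less)
  qed
  have tbound: "(\<Sum>m<n. t x m) \<le> 2 * norm x / e" for n x
  proof -
    define S where "S = (\<Sum>m<n. t x m)"
    have S0: "S \<ge> 0" unfolding S_def by (simp add: sum_nonneg t0)
    show ?thesis
    proof (cases "S = 0")
      case True then show ?thesis using e0 by (simp add: S_def)
    next
      case False
      then have Sp: "S > 0" using S0 by simp
      have "(\<Sum>m<n. (t x m / S) *\<^sub>R y (kk m)) \<in> convex hull (range y)"
        by (rule convex_sum) (use Sp t0 in \<open>auto simp: S_def[symmetric] sum_divide_distrib[symmetric] intro: hull_inc\<close>)
      then have "e \<le> norm (\<Sum>m<n. (t x m / S) *\<^sub>R y (kk m))" by (rule he)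
      also have "(\<Sum>m<n. (t x m / S) *\<^sub>R y (kk m)) = (1 / S) *\<^sub>R (\<Sum>m<n. t x m *\<^sub>R y (kk m))"
        by (simp add: scaleR_sum_right)
      also have "(\<Sum>m<n. t x m *\<^sub>R y (kk m)) = x - R n x" by (simp add: Rsum)
      finally have "S * e \<le> norm (x - R n x)" using Sp by (simp add: divide_simps mult.commute)
      also have "\<dots> \<le> norm x + norm (R n x)" by (rule norm_triangle_ineq4)
      also have "\<dots> \<le> 2 * norm x" using Rnorm[of n x] by simp
      finally show ?thesis using e0 by (simp add: S_def divide_simps mult.commute)
    qed
  qed
  have ybd: "norm (y k) \<le> 2" for k by (rule y_bound[OF fy nf on])
  have summ: "summable (\<lambda>m. t x m *\<^sub>R y (kk m))" for x
  proof -
    have st: "summable (t x)" by (rule summableI_nonneg_bounded[OF t0 tbound])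
    have "summable (\<lambda>m. norm (t x m *\<^sub>R y (kk m)))"
    proof (rule summable_comparison_test[OF _ summable_mult2[OF st, of 2]])
      show "\<exists>N. \<forall>n\<ge>N. norm (norm (t x n *\<^sub>R y (kk n))) \<le> t x n * 2"
        using ybd t0 by (auto intro!: mult_left_mono)
    qed
    then show ?thesis by (rule summable_norm_cancel)
  qed
  define Rl where "Rl = (\<lambda>x. x - suminf (\<lambda>m. t x m *\<^sub>R y (kk m)))"
  have Rlim: "(\<lambda>n. R n x) \<longlonglongrightarrow> Rl x" for x
    unfolding Rsum Rl_def by (intro tendsto_diff tendsto_const summable_LIMSEQ summ)
  have ne: "nonexpansive Rl"
    unfolding nonexpansive_def
  proof (intro allI)
    fix x z
    have "(\<lambda>n. norm (R n x - R n z)) \<longlonglongrightarrow> norm (Rl x - Rl z)"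
      by (intro tendsto_norm tendsto_diff Rlim)
    then show "norm (Rl x - Rl z) \<le> norm (x - z)"
      by (rule LIMSEQ_le_const2) (use Rne in auto)
  qed
  have RlF: "Rl p = p" if "p \<in> F" for p
  proof -
    have "(\<lambda>n. R n p) \<longlonglongrightarrow> p" using RF[OF that] by simp
    then show ?thesis using Rlim[of p] LIMSEQ_unique by blast
  qed
  have RlinF: "Rl x \<in> F" for x
    unfolding F_def
  proof (intro InterI, clarsimp)
    fix k
    define r where "r = (\<lambda>m. Suc (prod_encode (k, m)))"
    have sm: "strict_mono r"
      by (rule strict_monoI_Suc) (simp add: r_def prod_encode_def)
    have kr: "kk (prod_encode (k, m)) = k" for m by (simp add: kk_def)
    have fQ: "blinfun_apply (f k) (Q k v) \<le> d k" for v
      using fy[of k] by (auto simp: Q_def blinfun.diff_right blinfun.scaleR_right max_def)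
    have le: "blinfun_apply (f k) (R (r m) x) \<le> d k" for m
      using fQ by (simp add: r_def RS kr)
    have "((\<lambda>n. R n x) \<circ> r) \<longlonglongrightarrow> Rl x" by (rule LIMSEQ_subseq_LIMSEQ[OF Rlim sm])
    then have "(\<lambda>m. blinfun_apply (f k) (R (r m) x)) \<longlonglongrightarrow> blinfun_apply (f k) (Rl x)"
      using bounded_linear.tendsto[OF blinfun.bounded_linear_right] by (auto simp: o_def)
    then show "blinfun_apply (f k) (Rl x) \<le> d k"
      by (rule LIMSEQ_le_const2) (use le in auto)
  qed
  show ?thesis
    unfolding contractive_set_def F_def[symmetric]
    using F0 RlinF RlF ne by blast
qed

end
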